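(* Let $0<r'<r<1$ and $c>0$. Then the map $F:\mathbb{Z}((T))_{r,\le c}\to\mathbb{R}$, $\sum_{n\gg-\infty}a_nT^n\mapsto\sum_{n\gg-\infty}a_n(r')^n$, is continuous.
   Context: $\mathbb{Z}((T))_{r,\le c}$ is the set of integer Laurent series $\sum_{n\gg-\infty}a_nT^n$ ($a_n\in\mathbb{Z}$, $a_n=0$ for $n$ sufficiently negative) with $\sum|a_n|r^n\le c$, with the $T$-adic topology given by the norm $\|f\|=\delta^{v_T(f)}$ for fixed $\delta\in(0,1)$, $v_T(f)$ being the smallest index of a nonzero coefficient. $\mathbb{R}$ has its usual topology. *)

theory Defs
  imports "HOL-Analysis.Analysis"
begin

text \<open>Integer Laurent series: coefficient functions int => int vanishing for sufficiently negative indices.\<close>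
definition laurent :: "(int \<Rightarrow> int) set" where
  "laurent = {a. \<exists>N. \<forall>n<N. a n = 0}"

definition laurent_rc :: "real \<Rightarrow> real \<Rightarrow> (int \<Rightarrow> int) set" where
  "laurent_rc r c = {a \<in> laurent.
      (\<lambda>n. real_of_int \<bar>a n\<bar> * r powi n) summable_on UNIV \<and>
      (\<Sum>\<^sub>\<infinity>n. real_of_int \<bar>a n\<bar> * r powi n) \<le> c}"

definition tval :: "(int \<Rightarrow> int) \<Rightarrow> int" where
  "tval a = (LEAST n. a n \<noteq> 0)"

definition tnorm :: "real \<Rightarrow> (int \<Rightarrow> int) \<Rightarrow> real" where
  "tnorm \<delta> a = (if a = (\<lambda>_. 0) then 0 else \<delta> powi tval a)"

definition laurent_eval :: "real \<Rightarrow> (int \<Rightarrow> int) \<Rightarrow> real" where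
  "laurent_eval s a = (\<Sum>\<^sub>\<infinity>n. real_of_int (a n) * s powi n)"

end

theory Submission
  imports Defs
begin

lemma powi_anti:
  fixes q :: real
  assumes "0 < q" "q \<le> 1" "m \<le> n"
  shows "q powi n \<le> q powi m"
proof -
  have "q powi n = q powi m * q powi (n - m)"
    using assms by (simp flip: power_int_add)
  moreover have "q powi (n - m) \<le> 1" using assms by (intro power_int_le_one) auto
  moreover have "q powi m \<ge> 0" using assms by simp
  ultimately show ?thesis by (metis mult_left_le)
qed

lemma tval_zero:
  assumes "a \<in> laurent" "a \<noteq> (\<lambda>_. 0)" "n < tval a"
  shows "a n = 0"
proof -
  obtain M where M: "\<forall>n<M. a n = 0" using assms(1) unfolding laurent_def by auto
  obtain n0 where n0: "a n0 \<noteq> 0" using assms(2) by auto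
  have n0M: "n0 \<ge> M" using M n0 by (meson not_less)
  define k0 where "k0 = (LEAST k::nat. a (M + int k) \<noteq> 0)"
  have ex: "a (M + int (nat (n0 - M))) \<noteq> 0" using n0 n0M by simp
  have k0: "a (M + int k0) \<noteq> 0" unfolding k0_def by (rule LeastI[where P="\<lambda>k. a (M + int k) \<noteq> 0", OF ex])
  have le: "M + int k0 \<le> m" if "a m \<noteq> 0" for m
  proof -
    have "m \<ge> M" using M that by (meson not_less)
    hence "a (M + int (nat (m - M))) \<noteq> 0" using that by simp
    hence "k0 \<le> nat (m - M)" unfolding k0_def by (rule Least_le)
    thus ?thesis using \<open>m \<ge> M\<close> by linarith
  qed
  have "tval a = M + int k0" unfolding tval_def
    by (rule Least_equality) (use k0 le in auto)
  thus ?thesis using assms(3) le by force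
qed

lemma eval_summable:
  fixes r r' c :: real
  assumes "a \<in> laurent_rc r c" "0 < r'" "r' < r"
  shows "(\<lambda>n. real_of_int (a n) * r' powi n) summable_on UNIV"
proof -
  have aL: "a \<in> laurent" and S: "(\<lambda>n. real_of_int \<bar>a n\<bar> * r powi n) summable_on UNIV"
    using assms(1) unfolding laurent_rc_def by auto
  obtain M where M: "\<forall>n<M. a n = 0" using aL unfolding laurent_def by auto
  define q where "q = r' / r"
  have q: "0 < q" "q \<le> 1" using assms by (auto simp: q_def)
  define K where "K = q powi (min M 0)"
  have "(\<lambda>n. norm (real_of_int (a n) * r' powi n)) summable_on UNIV"
  proof (rule Infinite_Sum.abs_summable_on_comparison_test'[where f="\<lambda>n. real_of_int (a n) * r' powi n"])
    show "(\<lambda>n. K * (real_of_int \<bar>a n\<bar> * r powi n)) summable_on UNIV"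
      by (rule summable_on_cmult_right[OF S])
  next
    fix n :: int
    show "norm (real_of_int (a n) * r' powi n) \<le> K * (real_of_int \<bar>a n\<bar> * r powi n)"
    proof (cases "a n = 0")
      case True thus ?thesis by simp
    next
      case False
      hence "n \<ge> M" using M by (meson not_less)
      have r': "r' = r * q" using assms by (simp add: q_def)
      have "r' powi n = r powi n * q powi n" unfolding r' by (rule power_int_mult_distrib)
      moreover have "q powi n \<le> K" unfolding K_def using q \<open>n \<ge> M\<close> by (intro powi_anti) auto
      moreover have "r powi n > 0" using assms by simp
      moreover have "r' powi n > 0" using assms by simp
      ultimately have "r' powi n \<le> K * r powi n" by (metis mult.commute mult_right_mono less_imp_le)
      hence "\<bar>real_of_int (a n)\<bar> * r' powi n \<le> \<bar>real_of_int (a n)\<bar> * (K * r powi n)"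
        by (intro mult_left_mono) auto
      thus ?thesis using \<open>r' powi n > 0\<close> by (simp add: abs_mult mult.assoc mult.left_commute)
    qed
  qed
  thus ?thesis by (rule Infinite_Sum.abs_summable_summable)
qed

theorem mainTheorem13:
  fixes r r' c \<delta> :: real
  assumes "0 < r'" and "r' < r" and "r < 1" and "0 < c"
    and "0 < \<delta>" and "\<delta> < 1"
  shows "\<forall>f\<in>laurent_rc r c. \<forall>\<epsilon>>0. \<exists>\<eta>>0. \<forall>g\<in>laurent_rc r c.
           tnorm \<delta> (\<lambda>n. g n - f n) < \<eta> \<longrightarrow>
           \<bar>laurent_eval r' g - laurent_eval r' f\<bar> < \<epsilon>"
proof (intro ballI allI impI)
  fix f :: "int \<Rightarrow> int" and \<epsilon> :: real
  assume f: "f \<in> laurent_rc r c" and e: "\<epsilon> > 0"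
  define q where "q = r' / r"
  have q: "0 < q" "q < 1" using assms by (auto simp: q_def)
  obtain N :: nat where N: "q ^ N < \<epsilon> / (2 * c)"
    using real_arch_pow_inv[of "\<epsilon> / (2 * c)" q] q e assms by auto
  have qN: "2 * c * q ^ N < \<epsilon>" using N assms by (simp add: field_simps)
  show "\<exists>\<eta>>0. \<forall>g\<in>laurent_rc r c. tnorm \<delta> (\<lambda>n. g n - f n) < \<eta> \<longrightarrow>
           \<bar>laurent_eval r' g - laurent_eval r' f\<bar> < \<epsilon>"
  proof (intro exI[of _ "\<delta> ^ N"] conjI ballI impI)
    show "\<delta> ^ N > 0" using assms by simp
    fix g assume g: "g \<in> laurent_rc r c" and tn: "tnorm \<delta> (\<lambda>n. g n - f n) < \<delta> ^ N"
    define h where "h = (\<lambda>n. g n - f n)"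
    have fL: "f \<in> laurent" and Sf: "(\<lambda>n. real_of_int \<bar>f n\<bar> * r powi n) summable_on UNIV"
      and cf: "(\<Sum>\<^sub>\<infinity>n. real_of_int \<bar>f n\<bar> * r powi n) \<le> c"
      using f unfolding laurent_rc_def by auto
    have gL: "g \<in> laurent" and Sg: "(\<lambda>n. real_of_int \<bar>g n\<bar> * r powi n) summable_on UNIV"
      and cg: "(\<Sum>\<^sub>\<infinity>n. real_of_int \<bar>g n\<bar> * r powi n) \<le> c"
      using g unfolding laurent_rc_def by auto
    have hz: "h n = 0" if "n < int N" for n
    proof (cases "h = (\<lambda>_. 0)")
      case True thus ?thesis by simp
    next
      case False
      have hL: "h \<in> laurent"
      proof -
        obtain M1 where "\<forall>n<M1. f n = 0" using fL unfolding laurent_def by auto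
        moreover obtain M2 where "\<forall>n<M2. g n = 0" using gL unfolding laurent_def by auto
        ultimately have "\<forall>n<min M1 M2. h n = 0" unfolding h_def by auto
        thus ?thesis unfolding laurent_def by blast
      qed
      have lt: "\<delta> powi tval h < \<delta> powi int N" using tn False unfolding tnorm_def h_def by simp
      have "int N < tval h"
      proof (rule ccontr)
        assume "\<not> int N < tval h"
        hence "\<delta> powi int N \<le> \<delta> powi tval h" using assms by (intro powi_anti) auto
        thus False using lt by simp
      qed
      thus ?thesis using tval_zero[OF hL False] that by simp
    qed
    define G where "G = (\<lambda>n. real_of_int (g n) * r' powi n)"
    define F where "F = (\<lambda>n. real_of_int (f n) * r' powi n)"
    define B where "B = (\<lambda>n. q ^ N * (real_of_int \<bar>g n\<bar> * r powi n + real_of_int \<bar>f n\<bar> * r powi n))"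
    have SG: "G summable_on UNIV" unfolding G_def using eval_summable[OF g assms(1,2)] .
    have SF: "F summable_on UNIV" unfolding F_def using eval_summable[OF f assms(1,2)] .
    have SB: "B summable_on UNIV" unfolding B_def
      by (intro summable_on_cmult_right summable_on_add Sg Sf)
    have bound: "norm (G n - F n) \<le> B n" for n
    proof (cases "n < int N")
      case True
      hence "G n = F n" using hz[OF True] unfolding G_def F_def h_def by simp
      moreover have "B n \<ge> 0" unfolding B_def using assms q by simp
      ultimately show ?thesis by simp
    next
      case False
      have r': "r' = r * q" using assms by (simp add: q_def)
      have rp: "r' powi n = r powi n * q powi n" unfolding r' by (rule power_int_mult_distrib)
      have qn: "q powi n \<le> q ^ N"
        using powi_anti[of q "int N" n] q False by simp
      have rpos: "r powi n > 0" "r' powi n > 0" using assms by auto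
      have "norm (G n - F n) \<le> (\<bar>real_of_int (g n)\<bar> + \<bar>real_of_int (f n)\<bar>) * r' powi n"
        unfolding G_def F_def using rpos
        by (simp add: abs_mult flip: left_diff_distrib)
      also have "\<dots> = (\<bar>real_of_int (g n)\<bar> + \<bar>real_of_int (f n)\<bar>) * r powi n * q powi n"
        by (simp add: rp)
      also have "\<dots> \<le> (\<bar>real_of_int (g n)\<bar> + \<bar>real_of_int (f n)\<bar>) * r powi n * q ^ N"
        using rpos qn by (intro mult_left_mono) auto
      also have "\<dots> = B n" unfolding B_def by (simp add: algebra_simps)
      finally show ?thesis .
    qed
    have absD: "(\<lambda>n. norm (G n - F n)) summable_on UNIV"
      by (rule Infinite_Sum.abs_summable_on_comparison_test'[OF SB]) (use bound in auto)
    have "laurent_eval r' g - laurent_eval r' f = infsum (\<lambda>n. G n - F n) UNIV"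
    proof -
      have "infsum (\<lambda>n. G n + (- F n)) UNIV = infsum G UNIV + infsum (\<lambda>n. - F n) UNIV"
        by (rule infsum_add) (use SG SF summable_on_uminus in auto)
      thus ?thesis unfolding laurent_eval_def G_def F_def by (simp add: infsum_uminus)
    qed
    also have "\<bar>\<dots>\<bar> \<le> infsum (\<lambda>n. norm (G n - F n)) UNIV"
      using norm_infsum_bound[of "\<lambda>n. G n - F n" UNIV] absD by simp
    also have "\<dots> \<le> infsum B UNIV"
      by (rule infsum_mono[OF absD SB]) (use bound in auto)
    also have "\<dots> = q ^ N * ((\<Sum>\<^sub>\<infinity>n. real_of_int \<bar>g n\<bar> * r powi n) + (\<Sum>\<^sub>\<infinity>n. real_of_int \<bar>f n\<bar> * r powi n))"
    proof -
      have S2: "(\<lambda>n. real_of_int \<bar>g n\<bar> * r powi n + real_of_int \<bar>f n\<bar> * r powi n) summable_on UNIV"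
        by (rule summable_on_add[OF Sg Sf])
      show ?thesis unfolding B_def
        using infsum_cmult_right[OF S2, of "q ^ N"] infsum_add[OF Sg Sf] by simp
    qed
    also have "\<dots> \<le> q ^ N * (2 * c)"
      using cg cf q by (intro mult_left_mono) auto
    also have "\<dots> < \<epsilon>" using qN by (simp add: algebra_simps)
    finally show "\<bar>laurent_eval r' g - laurent_eval r' f\<bar> < \<epsilon>" .
  qed
qed

end
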